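(* Let $G=\mathrm{SL}(2,\mathbb{C})$. For $i=1,2,3$ let $\mathbf{a}_i\in G$ with $\mathrm{tr}(\mathbf{a}_i)=t_i$, put $\overline{\mathbf{a}}_i=\mathbf{a}_i-(t_i/2)\mathbf{e}$ and $s_{ij}=\mathrm{tr}(\overline{\mathbf{a}}_i\overline{\mathbf{a}}_j)$, and let $S=(s_{ij})_{i,j=1}^3$. (i) The matrices $\overline{\mathbf{a}}_1,\overline{\mathbf{a}}_2,\overline{\mathbf{a}}_3$ are linearly independent (over $\mathbb{C}$) if and only if $\det(S)\neq 0$. (ii) Suppose $\det(S)\neq0$. Let $s_{14},s_{24},s_{34},t_4\in\mathbb{C}$ be given, and set $s_{44}=\tfrac12 t_4^2-2$ and $s_{4i}=s_{i4}$ for $i=1,2,3$. Then there exists $\mathbf{a}_4\in G$ with $\mathrm{tr}(\mathbf{a}_4)=t_4$ and $\mathrm{tr}(\overline{\mathbf{a}}_i\overline{\mathbf{a}}_4)=s_{i4}$ for $1\le i\le 3$, where $\overline{\mathbf{a}}_4=\mathbf{a}_4-(t_4/2)\mathbf{e}$, if and only if $\det\big((s_{ij})_{i,j=1}^4\big)=0$.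
   Context: $\mathbf{e}$ denotes the $2\times2$ identity matrix. *)

theory Defs
  imports "HOL-Analysis.Analysis"
begin

type_synonym mat2 = "complex^2^2"

definition mtrace :: "mat2 \<Rightarrow> complex" where
  "mtrace A = A$1$1 + A$2$2"

definition in_SL2 :: "mat2 \<Rightarrow> bool" where
  "in_SL2 A \<longleftrightarrow> det A = 1"

definition cscale :: "complex \<Rightarrow> mat2 \<Rightarrow> mat2" where
  "cscale c A = (\<chi> i j. c * A$i$j)"

definition bar :: "mat2 \<Rightarrow> mat2" where
  "bar A = A - cscale (mtrace A / 2) (mat 1)"

definition lin_indep3 :: "(3 \<Rightarrow> mat2) \<Rightarrow> bool" where
  "lin_indep3 v \<longleftrightarrow>
     (\<forall>c :: 3 \<Rightarrow> complex. (\<Sum>i\<in>UNIV. cscale (c i) (v i)) = 0 \<longrightarrow> (\<forall>i. c i = 0))"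

text \<open>Embedding of the indices 1,2,3 of the 4-element index type into the 3-element index type
  (index 4 of the 4-element type, i.e. the numeral 4 = 0, is the new index).\<close>
definition emb43 :: "4 \<Rightarrow> 3" where
  "emb43 i = (if i = 1 then 1 else if i = 2 then 2 else 3)"

definition Smat3 :: "(3 \<Rightarrow> mat2) \<Rightarrow> complex^3^3" where
  "Smat3 a = (\<chi> i j. mtrace (bar (a i) ** bar (a j)))"

definition Smat4 :: "(3 \<Rightarrow> mat2) \<Rightarrow> (3 \<Rightarrow> complex) \<Rightarrow> complex \<Rightarrow> complex^4^4" where
  "Smat4 a s4 t4 = (\<chi> i j.
      if i \<noteq> 4 \<and> j \<noteq> 4 then mtrace (bar (a (emb43 i)) ** bar (a (emb43 j)))
      else if i \<noteq> 4 then s4 (emb43 i)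
      else if j \<noteq> 4 then s4 (emb43 j)
      else t4^2 / 2 - 2)"

end

theory Submission
  imports Defs
begin

definition crd :: "mat2 \<Rightarrow> complex^3" where
  "crd A = (\<chi> k. if k = 1 then (A$1$1 - A$2$2)/2 else if k = 2 then A$1$2 else A$2$1)"

definition Bf :: "complex^3 \<Rightarrow> complex^3 \<Rightarrow> complex" where
  "Bf u v = 2 * u$1 * v$1 + u$2 * v$3 + u$3 * v$2"

lemma crd_simps [simp]: "crd A $ 1 = (A$1$1 - A$2$2)/2" "crd A $ 2 = A$1$2" "crd A $ 3 = A$2$1"
  by (simp_all add: crd_def)

lemma bar_simps [simp]: "bar A $ 1 $ 1 = (A$1$1 - A$2$2)/2" "bar A $ 2 $ 2 = - (A$1$1 - A$2$2)/2"
  "bar A $ 1 $ 2 = A$1$2" "bar A $ 2 $ 1 = A$2$1"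
  by (simp_all add: bar_def cscale_def mtrace_def mat_def field_simps)

lemma trbar: "mtrace (bar A ** bar B) = Bf (crd A) (crd B)"
  by (simp add: mtrace_def matrix_matrix_mult_def sum_2 Bf_def field_simps) 

definition Mm :: "(3 \<Rightarrow> mat2) \<Rightarrow> complex^3^3" where
  "Mm a = (\<chi> r i. crd (a i) $ r)"

definition Qm :: "complex^3^3" where
  "Qm = (\<chi> i j. if i = 1 \<and> j = 1 then 2 else if (i = 2 \<and> j = 3) \<or> (i = 3 \<and> j = 2) then 1 else 0)"

lemma Qm_simps [simp]: "Qm$1$1 = 2" "Qm$1$2 = 0" "Qm$1$3 = 0" "Qm$2$1 = 0" "Qm$2$2 = 0" "Qm$2$3 = 1"
  "Qm$3$1 = 0" "Qm$3$2 = 1" "Qm$3$3 = 0"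
  by (simp_all add: Qm_def)

lemma det_Qm: "det Qm = -2"
  by (simp add: det_3)

lemma Bf_Mm: "(transpose (Mm a) ** Qm ** Mm a) $ i $ j = Bf (crd (a i)) (crd (a j))"
  by (simp add: matrix_matrix_mult_def sum_3 transpose_def Mm_def Bf_def algebra_simps)

lemma S_fact: "Smat3 a = transpose (Mm a) ** Qm ** Mm a"
  by (simp add: vec_eq_iff Bf_Mm Smat3_def trbar)

lemma det_S: "det (Smat3 a) = -2 * det (Mm a) * det (Mm a)"
  by (simp add: S_fact det_mul det_transpose det_Qm)

lemma sum_comp: "(\<Sum>i\<in>UNIV. cscale (c i) (v i)) $ p $ q = (\<Sum>i\<in>UNIV. c i * v i $ p $ q)"
  by (simp add: sum_component cscale_def)

lemma lin_iff: "((\<Sum>i\<in>UNIV. cscale (c i) (bar (a i))) = 0) \<longleftrightarrow> Mm a *v (\<chi> i. c i) = 0"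
proof -
  let ?X = "(\<Sum>i\<in>UNIV. cscale (c i) (bar (a i)))"
  let ?y = "Mm a *v (\<chi> i. c i)"
  have e: "?X$1$1 = ?y$1" "?X$2$2 = - ?y$1" "?X$1$2 = ?y$2" "?X$2$1 = ?y$3"
    unfolding sum_comp by (simp_all add: sum_3 matrix_vector_mult_def Mm_def field_simps)
  show ?thesis
    by (simp only: vec_eq_iff forall_2 forall_3 zero_index e) auto
qed

lemma part1: "lin_indep3 (\<lambda>i. bar (a i)) \<longleftrightarrow> det (Smat3 a) \<noteq> 0"
proof -
  have "lin_indep3 (\<lambda>i. bar (a i)) \<longleftrightarrow> (\<forall>x. Mm a *v x = 0 \<longrightarrow> x = 0)"
    unfolding lin_indep3_def lin_iff
  proof safe
    fix x assume H: "\<forall>c. Mm a *v (\<chi> i. c i) = 0 \<longrightarrow> (\<forall>i. c i = 0)" "Mm a *v x = 0"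
    then have "\<forall>i. x $ i = 0" using H(1)[rule_format, of "\<lambda>i. x $ i"] by simp
    then show "x = 0" by (simp add: vec_eq_iff)
  next
    fix c i assume "\<forall>x. Mm a *v x = 0 \<longrightarrow> x = 0" "Mm a *v (\<chi> i. c i) = 0"
    then have "(\<chi> i. c i) = (0::complex^3)" by blast
    then show "c i = 0" by (metis vec_lambda_beta zero_index)
  qed
  also have "\<dots> \<longleftrightarrow> det (Mm a) \<noteq> 0"
    by (simp add: matrix_left_invertible_ker[symmetric] invertible_left_inverse[symmetric] invertible_det_nz)
  finally show ?thesis by (simp add: det_S)
qed

lemma det4_explicit:
  "det (A::'a::comm_ring_1^4^4) =
 A$1$1*A$2$2*A$3$3*A$4$4 - A$1$1*A$2$2*A$3$4*A$4$3 - A$1$1*A$2$3*A$3$2*A$4$4 + A$1$1*A$2$3*A$3$4*A$4$2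
 + A$1$1*A$2$4*A$3$2*A$4$3 - A$1$1*A$2$4*A$3$3*A$4$2
 - A$1$2*A$2$1*A$3$3*A$4$4 + A$1$2*A$2$1*A$3$4*A$4$3 + A$1$2*A$2$3*A$3$1*A$4$4 - A$1$2*A$2$3*A$3$4*A$4$1
 - A$1$2*A$2$4*A$3$1*A$4$3 + A$1$2*A$2$4*A$3$3*A$4$1
 + A$1$3*A$2$1*A$3$2*A$4$4 - A$1$3*A$2$1*A$3$4*A$4$2 - A$1$3*A$2$2*A$3$1*A$4$4 + A$1$3*A$2$2*A$3$4*A$4$1
 + A$1$3*A$2$4*A$3$1*A$4$2 - A$1$3*A$2$4*A$3$2*A$4$1
 - A$1$4*A$2$1*A$3$2*A$4$3 + A$1$4*A$2$1*A$3$3*A$4$2 + A$1$4*A$2$2*A$3$1*A$4$3 - A$1$4*A$2$2*A$3$3*A$4$1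
 - A$1$4*A$2$3*A$3$1*A$4$2 + A$1$4*A$2$3*A$3$2*A$4$1"
proof -
  have f1: "finite {2::4, 3, 4}" "1 \<notin> {2::4, 3, 4}" by auto
  have f2: "finite {3::4, 4}" "2 \<notin> {3::4, 4}" by auto
  have f3: "finite {4::4}" "3 \<notin> {4::4}" by auto
  show ?thesis
    unfolding det_def UNIV_4
    unfolding sum_over_permutations_insert[OF f1]
    unfolding sum_over_permutations_insert[OF f2]
    unfolding sum_over_permutations_insert[OF f3]
    unfolding permutes_sing
    by (simp add: sign_swap_id permutation_swap_id permutation_compose sign_compose sign_id swap_id_eq algebra_simps)
qed

lemma emb_simps [simp]: "emb43 1 = 1" "emb43 2 = 2" "emb43 3 = 3"
  by (simp_all add: emb43_def)

definition P4 :: "(3 \<Rightarrow> mat2) \<Rightarrow> complex^3 \<Rightarrow> complex^4^4" where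
  "P4 a w = (\<chi> r j. if r = 4 then (if j = 4 then 1 else 0)
     else if j = 4 then w $ emb43 r else Mm a $ emb43 r $ emb43 j)"

definition Q4 :: "complex \<Rightarrow> complex^4^4" where
  "Q4 d = (\<chi> r k. if r = 4 \<or> k = 4 then (if r = 4 \<and> k = 4 then d else 0)
     else Qm $ emb43 r $ emb43 k)"

lemma det_P4: "det (P4 a w) = det (Mm a)"
  by (simp add: det4_explicit det_3 P4_def algebra_simps)

lemma det_Q4: "det (Q4 d) = -2 * d"
  by (simp add: det4_explicit Q4_def)

lemma S4_fact:
  assumes "\<And>i. Bf (crd (a i)) w = s4 i"
  shows "Smat4 a s4 t4 = transpose (P4 a w) ** Q4 (t4^2/2 - 2 - Bf w w) ** P4 a w"
proof -
  have e: "Smat4 a s4 t4 = (\<chi> i j.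
      if i \<noteq> 4 \<and> j \<noteq> 4 then Bf (crd (a (emb43 i))) (crd (a (emb43 j)))
      else if i \<noteq> 4 then s4 (emb43 i)
      else if j \<noteq> 4 then s4 (emb43 j)
      else t4^2 / 2 - 2)" unfolding Smat4_def trbar by (rule refl)
  show ?thesis
  unfolding vec_eq_iff forall_4 e
  by (simp add: matrix_matrix_mult_def matrix_matrix_mult_def sum_4 sum_3 transpose_def P4_def Q4_def Mm_def
     assms[symmetric] Bf_def field_simps)
qed

lemma det_S4:
  assumes "\<And>i. Bf (crd (a i)) w = s4 i"
  shows "det (Smat4 a s4 t4) = -2 * det (Mm a) * det (Mm a) * (t4^2/2 - 2 - Bf w w)"
  by (simp add: S4_fact[OF assms] det_mul det_transpose det_P4 det_Q4 field_simps)


lemma Bf_self: assumes "in_SL2 A" shows "Bf (crd A) (crd A) = (mtrace A)^2/2 - 2"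
  using assms by (simp add: in_SL2_def det_2 Bf_def mtrace_def field_simps power2_eq_square)

lemma MQ_apply: "((transpose (Mm a) ** Qm) *v w) $ i = Bf (crd (a i)) w"
  by (simp add: matrix_vector_mult_def matrix_matrix_mult_def sum_3 transpose_def Mm_def Bf_def algebra_simps)

definition mk4 :: "complex^3 \<Rightarrow> complex \<Rightarrow> mat2" where
  "mk4 w t = (\<chi> i j. if i = 1 then (if j = 1 then w$1 + t/2 else w$2)
                      else (if j = 1 then w$3 else - w$1 + t/2))"

lemma mk4_simps [simp]: "mk4 w t $ 1 $ 1 = w$1 + t/2" "mk4 w t $ 1 $ 2 = w$2"
  "mk4 w t $ 2 $ 1 = w$3" "mk4 w t $ 2 $ 2 = - w$1 + t/2"
  by (simp_all add: mk4_def)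

lemma crd_mk4: "crd (mk4 w t) = w"
  by (simp add: vec_eq_iff forall_3)

lemma tr_mk4: "mtrace (mk4 w t) = t"
  by (simp add: mtrace_def)

lemma det_mk4: "det (mk4 w t) = t^2/4 - Bf w w / 2"
  by (simp add: det_2 Bf_def field_simps power2_eq_square)

theorem mainTheorem1:
  fixes a :: "3 \<Rightarrow> mat2"
  assumes "\<And>i. in_SL2 (a i)"
  shows "(lin_indep3 (\<lambda>i. bar (a i)) \<longleftrightarrow> det (Smat3 a) \<noteq> 0)
       \<and> (det (Smat3 a) \<noteq> 0 \<longrightarrow>
          (\<forall>(s4 :: 3 \<Rightarrow> complex) (t4 :: complex).
             (\<exists>a4. in_SL2 a4 \<and> mtrace a4 = t4 \<and>
                   (\<forall>i. mtrace (bar (a i) ** bar a4) = s4 i))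
             \<longleftrightarrow> det (Smat4 a s4 t4) = 0))"
proof (intro conjI impI allI)
  show "lin_indep3 (\<lambda>i. bar (a i)) \<longleftrightarrow> det (Smat3 a) \<noteq> 0" by (rule part1)
next
  fix s4 :: "3 \<Rightarrow> complex" and t4 :: complex
  assume dS: "det (Smat3 a) \<noteq> 0"
  then have dM: "det (Mm a) \<noteq> 0" by (simp add: det_S)
  show "(\<exists>a4. in_SL2 a4 \<and> mtrace a4 = t4 \<and>
                   (\<forall>i. mtrace (bar (a i) ** bar a4) = s4 i))
             \<longleftrightarrow> det (Smat4 a s4 t4) = 0"
  proof
    assume "\<exists>a4. in_SL2 a4 \<and> mtrace a4 = t4 \<and> (\<forall>i. mtrace (bar (a i) ** bar a4) = s4 i)"
    then obtain a4 where h: "in_SL2 a4" "mtrace a4 = t4" "\<And>i. mtrace (bar (a i) ** bar a4) = s4 i"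
      by blast
    have "\<And>i. Bf (crd (a i)) (crd a4) = s4 i" using h(3) by (simp add: trbar)
    from det_S4[OF this] show "det (Smat4 a s4 t4) = 0"
      using Bf_self[OF h(1)] h(2) by simp
  next
    assume d4: "det (Smat4 a s4 t4) = 0"
    have "det (transpose (Mm a) ** Qm) \<noteq> 0"
      using dM by (simp add: det_mul det_transpose det_Qm)
    then have "invertible (transpose (Mm a) ** Qm)" by (simp add: invertible_det_nz)
    then have "surj (\<lambda>x. (transpose (Mm a) ** Qm) *v x)"
      unfolding invertible_right_inverse matrix_right_invertible_surjective[symmetric] by blast
    then obtain w where w: "(transpose (Mm a) ** Qm) *v w = (\<chi> i. s4 i)"
      by (metis surjD)
    have wB: "\<And>i. Bf (crd (a i)) w = s4 i"
      using w by (metis MQ_apply vec_lambda_beta)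
    from det_S4[OF wB] d4 dM have Bw: "Bf w w = t4^2/2 - 2" by simp
    show "\<exists>a4. in_SL2 a4 \<and> mtrace a4 = t4 \<and> (\<forall>i. mtrace (bar (a i) ** bar a4) = s4 i)"
    proof (intro exI conjI allI)
      show "in_SL2 (mk4 w t4)" unfolding in_SL2_def det_mk4 Bw by (simp add: field_simps)
      show "mtrace (mk4 w t4) = t4" by (rule tr_mk4)
      fix i show "mtrace (bar (a i) ** bar (mk4 w t4)) = s4 i"
        by (simp add: trbar crd_mk4 wB)
    qed
  qed
qed

end
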